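(* Let $f(z)=z+\sum_{n=2}^{\infty}a_nz^n$ belong to $\mathcal{S}^*_{ch}$, and let $\Gamma_1=-\frac12a_2$ and $\Gamma_2=-\frac12\big(a_3-\frac32a_2^2\big)$ be its first two logarithmic inverse coefficients. Then $$-\frac{1}{\sqrt{10}}\le |\Gamma_2|-|\Gamma_1|\le\frac14.$$ Both inequalities are sharp (each bound is attained by some function in $\mathcal{S}^*_{ch}$).
   Context: $\mathbb{D}=\{z\in\mathbb{C}:|z|<1\}$. $\mathcal{A}$ is the class of analytic $f$ on $\mathbb{D}$ with $f(0)=0$, $f'(0)=1$. For analytic $g,h$ on $\mathbb{D}$, $g\prec h$ means there is an analytic $\omega$ on $\mathbb{D}$ with $\omega(0)=0$, $|\omega(z)|<1$, and $g=h\circ\omega$. $\mathcal{S}^*_{ch}$ is the class of $f\in\mathcal{A}$ with $\frac{zf'(z)}{f(z)}\prec z+\cosh z$ on $\mathbb{D}$. Logarithmic inverse coefficients $\Gamma_n$ are defined by $\log\frac{f^{-1}(w)}{w}=2\sum_{n\ge1}\Gamma_nw^n$ for $w$ near $0$. *)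

theory Defs
  imports "HOL-Analysis.Analysis"
begin

definition subord :: "(complex \<Rightarrow> complex) \<Rightarrow> (complex \<Rightarrow> complex) \<Rightarrow> bool" where
  "subord g h \<longleftrightarrow> (\<exists>\<omega>. \<omega> holomorphic_on ball 0 1 \<and> \<omega> 0 = 0 \<and>
      (\<forall>z\<in>ball 0 1. norm (\<omega> z) < 1) \<and> (\<forall>z\<in>ball 0 1. g z = h (\<omega> z)))"

definition classA :: "(complex \<Rightarrow> complex) set" where
  "classA = {f. f holomorphic_on ball 0 1 \<and> f 0 = 0 \<and> deriv f 0 = 1}"

definition zdlog :: "(complex \<Rightarrow> complex) \<Rightarrow> complex \<Rightarrow> complex" where
  "zdlog f z = (if z = 0 then 1 else z * deriv f z / f z)"

text \<open>The class S*_ch: f in A with z f'/f (analytic on the disc, so f has no zeros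
  in the punctured disc) subordinate to z + cosh z.\<close>
definition Sch :: "(complex \<Rightarrow> complex) set" where
  "Sch = {f \<in> classA. (\<forall>z\<in>ball 0 1. z \<noteq> 0 \<longrightarrow> f z \<noteq> 0) \<and>
            subord (zdlog f) (\<lambda>z. z + cosh z)}"

definition coef :: "(complex \<Rightarrow> complex) \<Rightarrow> nat \<Rightarrow> complex" where
  "coef f n = (deriv ^^ n) f 0 / of_nat (fact n)"

definition Gamma1 :: "(complex \<Rightarrow> complex) \<Rightarrow> complex" where
  "Gamma1 f = - (1/2) * coef f 2"

definition Gamma2 :: "(complex \<Rightarrow> complex) \<Rightarrow> complex" where
  "Gamma2 f = - (1/2) * (coef f 3 - (3/2) * (coef f 2)^2)"

end

theory Submission
  imports Defs "HOL-Complex_Analysis.Complex_Analysis"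
begin

lemma phi_fps:
  shows "fps_expansion (\<lambda>z::complex. z + cosh z) 0 $ 0 = 1"
    "fps_expansion (\<lambda>z::complex. z + cosh z) 0 $ 1 = 1"
    "fps_expansion (\<lambda>z::complex. z + cosh z) 0 $ 2 = 1/2"
proof -
  have d1: "deriv (\<lambda>z::complex. z + cosh z) = (\<lambda>z. 1 + sinh z)"
    by (rule ext, rule DERIV_imp_deriv) (auto intro!: derivative_eq_intros)
  have d2: "deriv (\<lambda>z::complex. 1 + sinh z) = (\<lambda>z. cosh z)"
    by (rule ext, rule DERIV_imp_deriv) (auto intro!: derivative_eq_intros)
  show "fps_expansion (\<lambda>z::complex. z + cosh z) 0 $ 0 = 1"
    by (simp add: fps_expansion_def)
  show "fps_expansion (\<lambda>z::complex. z + cosh z) 0 $ 1 = 1"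
    by (simp add: fps_expansion_def d1)
  show "fps_expansion (\<lambda>z::complex. z + cosh z) 0 $ 2 = 1/2"
    by (simp add: fps_expansion_def d1 d2 numeral_2_eq_2)
qed

lemma cosh_holo: "(cosh :: complex \<Rightarrow> complex) holomorphic_on S"
proof -
  have "\<And>z. ((\<lambda>z::complex. cosh z) has_field_derivative sinh z) (at z)"
    by (auto intro!: derivative_eq_intros)
  then show ?thesis unfolding holomorphic_on_def field_differentiable_def
    by (metis has_field_derivative_at_within)
qed

lemma coef_eq: "f has_fps_expansion F \<Longrightarrow> coef f n = F $ n"
  by (simp add: coef_def fps_nth_fps_expansion)

lemma fps_unique: "f has_fps_expansion F \<Longrightarrow> f has_fps_expansion G \<Longrightarrow> F = (G :: complex fps)"
  by (simp add: fps_eq_iff fps_nth_fps_expansion)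

lemma coef_rel:
  fixes f \<omega> :: "complex \<Rightarrow> complex"
  assumes hf: "f holomorphic_on ball 0 1" and f0: "f 0 = 0" and f1: "deriv f 0 = 1"
    and hw: "\<omega> holomorphic_on ball 0 1" and w0: "\<omega> 0 = 0"
    and eq: "\<forall>z\<in>ball 0 1. z * deriv f z = f z * (\<omega> z + cosh (\<omega> z))"
  shows "coef f 2 = coef \<omega> 1" "coef f 3 = 3/4 * coef \<omega> 1 ^ 2 + coef \<omega> 2 / 2"
proof -
  define F where "F = fps_expansion f 0"
  define W where "W = fps_expansion \<omega> 0"
  define P where "P = fps_expansion (\<lambda>z::complex. z + cosh z) 0"
  have hF: "f has_fps_expansion F" unfolding F_def using hf by (intro has_fps_expansion_fps_expansion[of "ball 0 1"]) auto
  have hW: "\<omega> has_fps_expansion W" unfolding W_def using hw by (intro has_fps_expansion_fps_expansion[of "ball 0 1"]) auto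
  have hP: "(\<lambda>z::complex. z + cosh z) has_fps_expansion P" unfolding P_def
    by (rule has_fps_expansion_fps_expansion[of UNIV]) (auto intro!: holomorphic_intros cosh_holo)
  have W0: "W $ 0 = 0" using has_fps_expansion_imp_0_eq_fps_nth_0[OF hW] w0 by simp
  have F0: "F $ 0 = 0" using has_fps_expansion_imp_0_eq_fps_nth_0[OF hF] f0 by simp
  have F1: "F $ 1 = 1" using fps_nth_fps_expansion[OF hF, of 1] f1 by simp
  have hH: "((\<lambda>z::complex. z + cosh z) \<circ> \<omega>) has_fps_expansion (P oo W)"
    by (rule has_fps_expansion_compose[OF hP hW W0])
  have hR: "(\<lambda>z. f z * ((\<lambda>z::complex. z + cosh z) \<circ> \<omega>) z) has_fps_expansion F * (P oo W)"
    by (rule has_fps_expansion_mult[OF hF hH])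
  have hL: "(\<lambda>z. z * deriv f z) has_fps_expansion fps_X * fps_deriv F"
    by (intro has_fps_expansion_mult has_fps_expansion_fps_X has_fps_expansion_deriv hF)
  have ev: "eventually (\<lambda>z. z \<in> ball (0::complex) 1) (nhds 0)"
    by (rule eventually_nhds_in_open) auto
  have hL': "(\<lambda>z. z * deriv f z) has_fps_expansion F * (P oo W)"
    using hR
    by (subst has_fps_expansion_cong[OF eventually_mono[OF ev]]) (use eq in auto)
  have E: "fps_X * fps_deriv F = F * (P oo W)"
    by (rule fps_unique[OF hL hL'])
  have E2: "(fps_X * fps_deriv F) $ 2 = (F * (P oo W)) $ 2" using E by simp
  have E3: "(fps_X * fps_deriv F) $ 3 = (F * (P oo W)) $ 3" using E by simp
  have P0: "P $ 0 = 1" and P1: "P $ 1 = 1" and P2: "P $ 2 = 1/2"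
    unfolding P_def using phi_fps by auto
  have P1': "P $ Suc 0 = 1" and F1': "F $ Suc 0 = 1" using P1 F1 by simp_all
  have P2': "P $ Suc (Suc 0) = 1/2" using P2 by (simp add: numeral_2_eq_2)
  have H1: "(P oo W) $ 1 = W $ 1"
    by (simp add: fps_compose_nth P0 P1' W0)
  have H2: "(P oo W) $ 2 = W $ 2 + (W $ 1) ^ 2 / 2"
    by (simp add: fps_compose_nth P0 P1' P2' W0 numeral_2_eq_2 fps_mult_nth power2_eq_square)
  have H1': "(P oo W) $ Suc 0 = W $ Suc 0" using H1 by simp
  have H2': "(P oo W) $ Suc (Suc 0) = W $ Suc (Suc 0) + (W $ Suc 0) ^ 2 / 2" using H2 by (simp add: numeral_2_eq_2)
  have c2: "F $ 2 = W $ 1"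
    using E2 by (simp add: fps_mult_nth numeral_2_eq_2 F0 F1 F1' H1' P0 fps_deriv_nth)
  have c2': "F $ Suc (Suc 0) = W $ Suc 0" using c2 by (simp add: numeral_2_eq_2)
  show "coef f 2 = coef \<omega> 1" using c2 coef_eq[OF hF] coef_eq[OF hW] by simp
  have c3: "F $ 3 = 3/4 * (W $ 1) ^ 2 + W $ 2 / 2"
    using E3 by (simp add: fps_mult_nth numeral_3_eq_3 numeral_2_eq_2 F0 F1 F1' H1' H2' P0 c2' fps_deriv_nth field_simps)
  show "coef f 3 = 3/4 * coef \<omega> 1 ^ 2 + coef \<omega> 2 / 2" using c3 coef_eq[OF hF] coef_eq[OF hW] by simp
qed

lemma moebius_ident:
  fixes a w :: complex
  shows "norm (1 - cnj a * w) ^ 2 - norm (w - a) ^ 2 = (1 - norm a ^ 2) * (1 - norm w ^ 2)"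
  unfolding cmod_power2 by (simp add: algebra_simps power2_eq_square)

lemma moebius_lt1:
  fixes a w :: complex
  assumes "norm a < 1" "norm w < 1"
  shows "norm ((w - a) / (1 - cnj a * w)) < 1"
proof -
  have "0 < (1 - norm a ^ 2) * (1 - norm w ^ 2)"
    using assms by (intro mult_pos_pos) (auto simp: power_less_one_iff abs_square_less_1)
  hence "norm (w - a) ^ 2 < norm (1 - cnj a * w) ^ 2" using moebius_ident[of a w] by linarith
  hence lt: "norm (w - a) < norm (1 - cnj a * w)"
    by (meson norm_ge_zero power_less_imp_less_base)
  hence "norm (1 - cnj a * w) > 0" by (meson le_less_trans norm_ge_zero)
  thus ?thesis using lt by (simp add: norm_divide divide_less_eq)
qed

lemma linear_fps:
  fixes \<omega> :: "complex \<Rightarrow> complex"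
  assumes "\<forall>z\<in>ball 0 1. \<omega> z = \<alpha> * z"
  shows "\<omega> has_fps_expansion fps_const \<alpha> * fps_X"
proof -
  have ev: "eventually (\<lambda>z. z \<in> ball (0::complex) 1) (nhds 0)"
    by (rule eventually_nhds_in_open) auto
  have "(\<lambda>z. \<alpha> * z) has_fps_expansion fps_const \<alpha> * fps_X"
    by (intro has_fps_expansion_mult has_fps_expansion_const has_fps_expansion_fps_X)
  thus ?thesis
    by (subst has_fps_expansion_cong[OF eventually_mono[OF ev]]) (use assms in auto)
qed

lemma schur:
  fixes \<omega> :: "complex \<Rightarrow> complex"
  assumes hw: "\<omega> holomorphic_on ball 0 1" and w0: "\<omega> 0 = 0"
    and wb: "\<forall>z\<in>ball 0 1. norm (\<omega> z) < 1"
  shows "norm (coef \<omega> 2) \<le> 1 - norm (coef \<omega> 1) ^ 2"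
proof -
  define W where "W = fps_expansion \<omega> 0"
  have hW: "\<omega> has_fps_expansion W" unfolding W_def using hw
    by (intro has_fps_expansion_fps_expansion[of "ball 0 1"]) auto
  define a where "a = deriv \<omega> 0"
  have W1: "W $ 1 = a" using fps_nth_fps_expansion[OF hW, of 1] by (simp add: a_def)
  have no: "\<And>z. norm z < 1 \<Longrightarrow> norm (\<omega> z) < 1" using wb by auto
  note S = Schwarz_Lemma'[OF hw w0 no]
  have lin: "W $ 1 = \<alpha> \<and> W $ 2 = 0" if "\<forall>z. norm z < 1 \<longrightarrow> \<omega> z = \<alpha> * z" for \<alpha>
  proof -
    have "W = fps_const \<alpha> * fps_X"
      by (rule fps_unique[OF hW linear_fps]) (use that in auto)
    thus ?thesis by simp
  qed
  show ?thesis
  proof (cases "norm a = 1")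
    case True
    then obtain \<alpha> where "\<forall>z. norm z < 1 \<longrightarrow> \<omega> z = \<alpha> * z" using S a_def by blast
    then have "W $ 2 = 0" "W $ 1 = \<alpha>" using lin by auto
    then show ?thesis using coef_eq[OF hW] True W1 by simp
  next
    case False
    hence a1: "norm a < 1" using S a_def by force
    define \<psi> where "\<psi> = (\<lambda>z. if z = 0 then deriv \<omega> 0 else (\<omega> z - \<omega> 0) / (z - 0))"
    have hpsi: "\<psi> holomorphic_on ball 0 1" unfolding \<psi>_def
      by (rule pole_lemma[OF hw]) auto
    have psi_lt: "norm (\<psi> z) < 1" if z: "norm z < 1" for z
    proof (cases "z = 0")
      case True thus ?thesis using a1 by (simp add: \<psi>_def a_def)
    next
      case False
      have le: "norm (\<omega> z) \<le> norm z" using S z by blast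
      have "norm (\<omega> z) \<noteq> norm z"
      proof
        assume "norm (\<omega> z) = norm z"
        then obtain \<alpha> where al: "\<forall>z. norm z < 1 \<longrightarrow> \<omega> z = \<alpha> * z" "norm \<alpha> = 1"
          using S z False by blast
        then show False using lin[OF al(1)] W1 a1 by simp
      qed
      hence "norm (\<omega> z) < norm z" using le by simp
      thus ?thesis using False by (simp add: \<psi>_def w0 norm_divide divide_less_eq)
    qed
    define \<Psi> where "\<Psi> = fps_expansion \<psi> 0"
    have hPsi: "\<psi> has_fps_expansion \<Psi>" unfolding \<Psi>_def using hpsi
      by (intro has_fps_expansion_fps_expansion[of "ball 0 1"]) auto
    have ev: "eventually (\<lambda>z. z \<in> ball (0::complex) 1) (nhds 0)"
      by (rule eventually_nhds_in_open) auto
    have h1: "(\<lambda>z. z * \<psi> z) has_fps_expansion fps_X * \<Psi>"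
      by (intro has_fps_expansion_mult has_fps_expansion_fps_X hPsi)
    have h2: "\<omega> has_fps_expansion fps_X * \<Psi>"
      using h1 by (subst (asm) has_fps_expansion_cong[OF eventually_mono[OF ev]])
         (auto simp: \<psi>_def w0)
    have WP: "W = fps_X * \<Psi>" by (rule fps_unique[OF hW h2])
    have W2: "W $ 2 = deriv \<psi> 0"
      using fps_nth_fps_expansion[OF hPsi, of 1] WP by (simp add: numeral_2_eq_2)
    have psi0: "\<psi> 0 = a" by (simp add: \<psi>_def a_def)
    define g where "g = (\<lambda>z. (\<psi> z - a) / (1 - cnj a * \<psi> z))"
    have den: "1 - cnj a * \<psi> z \<noteq> 0" if "norm z < 1" for z
    proof
      assume "1 - cnj a * \<psi> z = 0"
      hence "norm (cnj a * \<psi> z) = 1" by (metis eq_iff_diff_eq_0 norm_one)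
      moreover have "norm (cnj a * \<psi> z) < 1"
      proof -
        have "norm a * norm (\<psi> z) \<le> norm (\<psi> z)" using a1 by (intro mult_left_le_one_le) auto
        thus ?thesis using psi_lt[OF that] by (simp add: norm_mult)
      qed
      ultimately show False by simp
    qed
    have hg: "g holomorphic_on ball 0 1" unfolding g_def
      using den by (intro holomorphic_intros hpsi) auto
    have g0: "g 0 = 0" by (simp add: g_def psi0)
    have gno: "\<And>z. norm z < 1 \<Longrightarrow> norm (g z) < 1"
      unfolding g_def using psi_lt a1 by (intro moebius_lt1) auto
    have dpsi: "(\<psi> has_field_derivative deriv \<psi> 0) (at 0)"
      using hpsi by (intro holomorphic_derivI[of _ "ball 0 1"]) auto
    have na: "1 - cnj a * a = of_real (1 - norm a ^ 2)"
      using complex_norm_square[of a] by (simp add: mult.commute)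
    have na0: "1 - norm a ^ 2 > 0" using a1 by (simp add: abs_square_less_1 power_less_one_iff)
    have b0: "1 - cnj a * a \<noteq> 0" by (metis na na0 of_real_eq_0_iff less_irrefl)
    have "(g has_field_derivative
        ((deriv \<psi> 0 - 0) * (1 - cnj a * \<psi> 0) - (\<psi> 0 - a) * (0 - cnj a * deriv \<psi> 0))
          / ((1 - cnj a * \<psi> 0) * (1 - cnj a * \<psi> 0))) (at 0)"
      unfolding g_def
      by (intro DERIV_divide DERIV_diff DERIV_cmult dpsi DERIV_const) (use den in auto)
    also have "((deriv \<psi> 0 - 0) * (1 - cnj a * \<psi> 0) - (\<psi> 0 - a) * (0 - cnj a * deriv \<psi> 0))
          / ((1 - cnj a * \<psi> 0) * (1 - cnj a * \<psi> 0)) = deriv \<psi> 0 / (1 - cnj a * a)"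
      using b0 by (simp add: psi0)
    finally have "(g has_field_derivative deriv \<psi> 0 / (1 - cnj a * a)) (at 0)" .
    hence dg: "deriv g 0 = deriv \<psi> 0 / (1 - cnj a * a)" by (rule DERIV_imp_deriv)
    have "norm (deriv g 0) \<le> 1" using Schwarz_Lemma'[OF hg g0 gno] by blast
    hence "norm (deriv \<psi> 0) \<le> 1 - norm a ^ 2"
    proof -
      have nb: "norm (1 - cnj a * a) = 1 - norm a ^ 2" by (metis na na0 norm_of_real abs_of_pos)
      have "norm (deriv \<psi> 0) / (1 - norm a ^ 2) \<le> 1"
        using \<open>norm (deriv g 0) \<le> 1\<close> by (simp only: dg norm_divide nb)
      thus ?thesis using na0 by (simp add: divide_le_eq)
    qed
    then show ?thesis using coef_eq[OF hW] W1 W2 by simp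
  qed
qed


lemma real_bounds:
  fixes c1 c2 :: complex
  assumes y: "norm c2 \<le> 1 - norm c1 ^ 2"
  shows "- 1 / sqrt 10 \<le> norm (c2/2 - 3/4 * c1^2) / 2 - norm c1 / 2"
    and "norm (c2/2 - 3/4 * c1^2) / 2 - norm c1 / 2 \<le> 1/4"
proof -
  define x where "x = norm c1"
  define N where "N = norm (c2/2 - 3/4 * c1^2)"
  have x0: "x \<ge> 0" by (simp add: x_def)
  have xx: "x^2 \<le> 1" using y norm_ge_zero[of c2] unfolding x_def by linarith
  hence x1: "x \<le> 1" using x0 by (simp add: power_le_one_iff abs_square_le_1)
  have nc: "norm (3/4 * c1^2) = 3/4 * x^2" by (simp add: x_def norm_mult norm_power)
  have Nup: "N \<le> norm c2 / 2 + 3/4 * x^2"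
    using norm_triangle_ineq4[of "c2/2" "3/4 * c1^2"] nc by (simp add: N_def norm_divide)
  have Nlo: "N \<ge> 3/4 * x^2 - norm c2 / 2"
    using norm_triangle_ineq3[of "3/4 * c1^2" "c2/2"] nc
    by (simp add: N_def norm_divide norm_minus_commute)
  have N0: "N \<ge> 0" by (simp add: N_def)
  have "x^2 \<le> x" using x0 x1 by (simp add: power2_eq_square mult_left_le_one_le)
  then show "N / 2 - norm c1 / 2 \<le> 1/4" using Nup y x0 unfolding x_def[symmetric] by linarith
  define s where "s = 1 / sqrt 10"
  have s2: "s^2 = 1/10" by (simp add: s_def power_divide)
  have s0: "s > 1/5"
  proof -
    have "sqrt 10 < 5" by (rule real_less_lsqrt) auto
    thus ?thesis by (simp add: s_def field_simps)
  qed
  have "- s \<le> N / 2 - x / 2"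
  proof (cases "x \<le> 2 * s")
    case True thus ?thesis using N0 by linarith
  next
    case False
    have "0 \<le> 5/8 * ((x - 2 * s) * (x - 4/5 + 2 * s))"
      using False s0 by (intro mult_nonneg_nonneg) auto
    also have "5/8 * ((x - 2 * s) * (x - 4/5 + 2 * s)) = 5/8*x^2 - x/2 - 1/4 + s"
      by (simp add: field_simps power2_eq_square s2[unfolded power2_eq_square])
    finally show ?thesis using Nlo y unfolding x_def[symmetric] by linarith
  qed
  then show "- 1 / sqrt 10 \<le> N / 2 - norm c1 / 2" by (simp add: s_def x_def)
qed


lemma Sch_rel:
  assumes "f \<in> Sch"
  obtains \<omega> where "\<omega> holomorphic_on ball 0 1" "\<omega> 0 = 0" "\<forall>z\<in>ball 0 1. norm (\<omega> z) < 1"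
    "coef f 2 = coef \<omega> 1" "coef f 3 = 3/4 * coef \<omega> 1 ^ 2 + coef \<omega> 2 / 2"
proof -
  from assms have hf: "f holomorphic_on ball 0 1" and f0: "f 0 = 0" and f1: "deriv f 0 = 1"
    and nz: "\<forall>z\<in>ball 0 1. z \<noteq> 0 \<longrightarrow> f z \<noteq> 0"
    and sub: "subord (zdlog f) (\<lambda>z. z + cosh z)"
    by (auto simp: Sch_def classA_def)
  from sub obtain \<omega> where hw: "\<omega> holomorphic_on ball 0 1" and w0: "\<omega> 0 = 0"
    and wb: "\<forall>z\<in>ball 0 1. norm (\<omega> z) < 1"
    and we: "\<forall>z\<in>ball 0 1. zdlog f z = \<omega> z + cosh (\<omega> z)"
    unfolding subord_def by blast
  have eq: "\<forall>z\<in>ball 0 1. z * deriv f z = f z * (\<omega> z + cosh (\<omega> z))"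
  proof
    fix z :: complex assume z: "z \<in> ball 0 1"
    show "z * deriv f z = f z * (\<omega> z + cosh (\<omega> z))"
    proof (cases "z = 0")
      case True thus ?thesis by (simp add: f0)
    next
      case False
      hence "f z \<noteq> 0" using nz z by blast
      moreover have "z * deriv f z / f z = \<omega> z + cosh (\<omega> z)" using bspec[OF we z] False by (simp add: zdlog_def)
      ultimately show ?thesis by (simp add: divide_eq_eq mult.commute)
    qed
  qed
  show ?thesis using coef_rel[OF hf f0 f1 hw w0 eq] hw w0 wb that by blast
qed

lemma gamma_form:
  assumes "coef f 2 = c1" "coef f 3 = 3/4 * c1 ^ 2 + c2 / 2"
  shows "norm (Gamma2 f) = norm (c2/2 - 3/4 * c1^2) / 2" "norm (Gamma1 f) = norm c1 / 2"
proof -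
  have "Gamma2 f = -(1/2) * (c2/2 - 3/4 * c1^2)"
    unfolding Gamma2_def assms by (simp add: field_simps)
  thus "norm (Gamma2 f) = norm (c2/2 - 3/4 * c1^2) / 2" by (simp add: norm_mult)
  show "norm (Gamma1 f) = norm c1 / 2" unfolding Gamma1_def assms by (simp add: norm_mult)
qed

lemma construct:
  fixes \<omega> :: "complex \<Rightarrow> complex"
  assumes hw: "\<omega> holomorphic_on ball 0 1" and w0: "\<omega> 0 = 0"
    and wb: "\<forall>z\<in>ball 0 1. norm (\<omega> z) < 1"
  shows "\<exists>f\<in>Sch. coef f 2 = coef \<omega> 1 \<and> coef f 3 = 3/4 * coef \<omega> 1 ^ 2 + coef \<omega> 2 / 2"
proof -
  define h where "h = (\<lambda>z. \<omega> z + cosh (\<omega> z))"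
  have hh: "h holomorphic_on ball 0 1"
  proof -
    have "(\<lambda>z. cosh (\<omega> z)) holomorphic_on ball 0 1"
      using holomorphic_on_compose[OF hw cosh_holo] by (simp add: o_def)
    thus ?thesis unfolding h_def by (intro holomorphic_on_add hw)
  qed
  have h0: "h 0 = 1" by (simp add: h_def w0)
  define q where "q = (\<lambda>z. if z = 0 then deriv h 0 else (h z - h 0) / (z - 0))"
  have hq: "q holomorphic_on ball 0 1" unfolding q_def by (rule pole_lemma[OF hh]) auto
  obtain G0 where G0: "\<And>x. x \<in> ball 0 1 \<Longrightarrow> (G0 has_field_derivative q x) (at x within ball 0 1)"
    using holomorphic_convex_primitive'[OF convex_ball open_ball hq] by blast
  define G where "G = (\<lambda>z. G0 z - G0 0)"
  have dG: "(G has_field_derivative q x) (at x)" if "x \<in> ball 0 1" for x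
  proof -
    have "(G0 has_field_derivative q x) (at x)" using G0[OF that] that
      by (metis at_within_open open_ball)
    from DERIV_diff[OF this DERIV_const[of "G0 0"]] show ?thesis unfolding G_def by simp
  qed
  have G00: "G 0 = 0" by (simp add: G_def)
  define f where "f = (\<lambda>z. z * exp (G z))"
  have df: "(f has_field_derivative (exp (G z) + z * (q z * exp (G z)))) (at z)"
    if "z \<in> ball 0 1" for z
  proof -
    have "((\<lambda>z. z * exp (G z)) has_field_derivative (1 * exp (G z) + (exp (G z) * q z) * z)) (at z)"
      by (rule DERIV_mult[OF DERIV_ident DERIV_fun_exp[OF dG[OF that]]])
    moreover have e: "1 * exp (G z) + (exp (G z) * q z) * z = exp (G z) + z * (q z * exp (G z))"
      by (simp add: mult.commute mult.left_commute)
    ultimately show ?thesis unfolding f_def e by blast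
  qed
  have hf: "f holomorphic_on ball 0 1"
    unfolding holomorphic_on_open[OF open_ball] using df by blast
  have derf: "deriv f z = exp (G z) + z * (q z * exp (G z))" if "z \<in> ball 0 1" for z
    using df[OF that] by (rule DERIV_imp_deriv)
  have f0: "f 0 = 0" by (simp add: f_def)
  have f1: "deriv f 0 = 1" using derf[of 0] by (simp add: G00)
  have nz: "\<forall>z\<in>ball 0 1. z \<noteq> 0 \<longrightarrow> f z \<noteq> 0" by (simp add: f_def)
  have hq': "z \<noteq> 0 \<Longrightarrow> 1 + z * q z = h z" for z by (simp add: q_def h0)
  have zd: "zdlog f z = \<omega> z + cosh (\<omega> z)" if "z \<in> ball 0 1" for z
  proof (cases "z = 0")
    case True thus ?thesis by (simp add: zdlog_def w0)
  next
    case False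
    have "zdlog f z = z * (exp (G z) * (1 + z * q z)) / (z * exp (G z))"
      using derf[OF that] False by (simp add: zdlog_def f_def distrib_left mult.assoc)
    also have "\<dots> = h z" using False hq'[OF False] by simp
    finally show ?thesis by (simp add: h_def)
  qed
  have inS: "f \<in> Sch"
  proof -
    have "subord (zdlog f) (\<lambda>z. z + cosh z)"
      unfolding subord_def using hw w0 wb zd by blast
    moreover have "f \<in> classA" unfolding classA_def using hf f0 f1 by blast
    ultimately show ?thesis unfolding Sch_def using nz by blast
  qed
  have eq: "\<forall>z\<in>ball 0 1. z * deriv f z = f z * (\<omega> z + cosh (\<omega> z))"
  proof
    fix z :: complex assume z: "z \<in> ball 0 1"
    show "z * deriv f z = f z * (\<omega> z + cosh (\<omega> z))"
    proof (cases "z = 0")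
      case True thus ?thesis by (simp add: f0)
    next
      case False
      have "z * deriv f z = z * exp (G z) * (1 + z * q z)"
        using derf[OF z] by (simp add: distrib_left mult.assoc mult.left_commute)
      thus ?thesis using hq'[OF False] by (simp add: f_def h_def)
    qed
  qed
  show ?thesis using inS coef_rel[OF hf f0 f1 hw w0 eq] by blast
qed


lemma lt1_mult:
  fixes x y :: real
  assumes "0 \<le> x" "x < 1" "0 \<le> y" "y < 1"
  shows "x * y < 1"
proof -
  have "x * y \<le> y" using assms by (intro mult_left_le_one_le) auto
  thus ?thesis using assms by linarith
qed

lemma ex_max: "\<exists>f\<in>Sch. norm (Gamma2 f) - norm (Gamma1 f) = 1 / 4"
proof -
  define \<omega> where "\<omega> = (\<lambda>z::complex. z ^ 2)"
  have hw: "\<omega> holomorphic_on ball 0 1" unfolding \<omega>_def by (intro holomorphic_intros)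
  have w0: "\<omega> 0 = 0" by (simp add: \<omega>_def)
  have wb: "\<forall>z\<in>ball 0 1. norm (\<omega> z) < 1"
    by (auto simp: \<omega>_def norm_power power_less_one_iff abs_square_less_1)
  have e: "\<omega> has_fps_expansion fps_X ^ 2" unfolding \<omega>_def by (rule has_fps_expansion_fps_X_power)
  have c1: "coef \<omega> 1 = 0" and c2: "coef \<omega> 2 = 1"
    using coef_eq[OF e, of 1] coef_eq[OF e, of 2] by (simp_all add: fps_X_power_iff)
  obtain f where f: "f \<in> Sch" "coef f 2 = coef \<omega> 1" "coef f 3 = 3/4 * coef \<omega> 1 ^ 2 + coef \<omega> 2 / 2"
    using construct[OF hw w0 wb] by blast
  note g = gamma_form[OF f(2,3)]
  show ?thesis using f(1) g c1 c2 by (intro bexI[of _ f]) auto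
qed

lemma ex_min: "\<exists>f\<in>Sch. norm (Gamma2 f) - norm (Gamma1 f) = - 1 / sqrt 10"
proof -
  define r where "r = sqrt (2/5)"
  have r0: "0 < r" "r < 1" by (auto simp: r_def)
  have rr: "r ^ 2 = 2/5" by (simp add: r_def)
  define a where "a = complex_of_real r"
  have na: "norm a < 1" using r0 by (simp add: a_def)
  have den: "1 + a * z \<noteq> 0" if "norm z < 1" for z
  proof
    assume "1 + a * z = 0"
    hence "norm (a * z) = 1" by (metis add.commute add_eq_0_iff norm_minus_cancel norm_one)
    moreover have "norm (a * z) < 1"
      using na that lt1_mult[of "norm a" "norm z"] by (simp add: norm_mult)
    ultimately show False by simp
  qed
  define \<omega> where "\<omega> = (\<lambda>z::complex. z * (z + a) / (1 + a * z))"
  have hw: "\<omega> holomorphic_on ball 0 1" unfolding \<omega>_def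
    using den by (intro holomorphic_intros) auto
  have w0: "\<omega> 0 = 0" by (simp add: \<omega>_def)
  have wb: "\<forall>z\<in>ball 0 1. norm (\<omega> z) < 1"
  proof
    fix z :: complex assume z: "z \<in> ball 0 1"
    have "norm ((z - (-a)) / (1 - cnj (-a) * z)) < 1"
      using na z by (intro moebius_lt1) auto
    moreover have "cnj (-a) = -a" by (simp add: a_def)
    ultimately have "norm ((z + a) / (1 + a * z)) < 1" by simp
    moreover have "norm z < 1" using z by simp
    ultimately have "norm z * norm ((z + a) / (1 + a * z)) < 1"
      by (metis lt1_mult norm_ge_zero)
    thus "norm (\<omega> z) < 1" by (simp add: \<omega>_def norm_mult norm_divide)
  qed
  define W where "W = fps_expansion \<omega> 0"
  have hW: "\<omega> has_fps_expansion W" unfolding W_def using hw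
    by (intro has_fps_expansion_fps_expansion[of "ball 0 1"]) auto
  have ev: "eventually (\<lambda>z. z \<in> ball (0::complex) 1) (nhds 0)"
    by (rule eventually_nhds_in_open) auto
  have h1: "(\<lambda>z. \<omega> z * (1 + a * z)) has_fps_expansion W * (1 + fps_const a * fps_X)"
    by (intro has_fps_expansion_mult hW has_fps_expansion_add has_fps_expansion_1
          has_fps_expansion_const has_fps_expansion_fps_X)
  have h2: "(\<lambda>z. z * (z + a)) has_fps_expansion fps_X * (fps_X + fps_const a)"
    by (intro has_fps_expansion_mult has_fps_expansion_add has_fps_expansion_const has_fps_expansion_fps_X)
  have h3: "(\<lambda>z. z * (z + a)) has_fps_expansion W * (1 + fps_const a * fps_X)"
    using h1 by (subst (asm) has_fps_expansion_cong[OF eventually_mono[OF ev]])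
      (use den in \<open>auto simp: \<omega>_def\<close>)
  have E: "W * (1 + fps_const a * fps_X) = fps_X * (fps_X + fps_const a)"
    by (rule fps_unique[OF h3 h2])
  have W0: "W $ 0 = 0" using has_fps_expansion_imp_0_eq_fps_nth_0[OF hW] w0 by simp
  have "(W * (1 + fps_const a * fps_X)) $ 1 = (fps_X * (fps_X + fps_const a)) $ 1" using E by simp
  hence W1: "W $ 1 = a" by (simp add: fps_mult_nth W0)
  have "(W * (1 + fps_const a * fps_X)) $ 2 = (fps_X * (fps_X + fps_const a)) $ 2" using E by simp
  hence W2: "W $ 2 = 1 - a ^ 2"
    using W1 by (simp add: fps_mult_nth numeral_2_eq_2 W0 power2_eq_square eq_diff_eq add.commute)
  have ar: "a ^ 2 = 2/5"
  proof -
    have "a ^ 2 = complex_of_real (r ^ 2)" by (simp add: a_def)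
    also have "\<dots> = 2/5" by (simp add: rr)
    finally show ?thesis .
  qed
  have c1: "coef \<omega> 1 = a" and c2: "coef \<omega> 2 = 3/5"
    using coef_eq[OF hW, of 1] coef_eq[OF hW, of 2] W1 W2 ar by simp_all
  obtain f where f: "f \<in> Sch" "coef f 2 = coef \<omega> 1" "coef f 3 = 3/4 * coef \<omega> 1 ^ 2 + coef \<omega> 2 / 2"
    using construct[OF hw w0 wb] by blast
  note g = gamma_form[OF f(2,3)]
  have z: "(3/5::complex) / 2 - 3/4 * a ^ 2 = 0"
    by (simp add: ar)
  have "r / 2 = 1 / sqrt 10"
  proof -
    have "r = sqrt (4 / 10)" unfolding r_def by simp
    also have "\<dots> = sqrt 4 / sqrt 10" by (rule real_sqrt_divide)
    also have "\<dots> = 2 / sqrt 10" using real_sqrt_abs[of 2] by simp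
    finally have "r = 2 / sqrt 10" .
    thus ?thesis by simp
  qed
  moreover have "norm a = r" using r0 unfolding a_def by simp
  ultimately have "norm a / 2 = 1 / sqrt 10" by simp
  have G2: "norm (Gamma2 f) = 0" using g(1) unfolding c1 c2 z by simp
  have G1: "norm (Gamma1 f) = 1 / sqrt 10" using g(2) \<open>norm a / 2 = 1 / sqrt 10\<close> unfolding c1 by simp
  show ?thesis using f(1) G1 G2 by (intro bexI[of _ f]) auto
qed

theorem theorem4p2:
  shows "(\<forall>f\<in>Sch. - 1 / sqrt 10 \<le> norm (Gamma2 f) - norm (Gamma1 f) \<and>
                     norm (Gamma2 f) - norm (Gamma1 f) \<le> 1 / 4)
       \<and> (\<exists>f\<in>Sch. norm (Gamma2 f) - norm (Gamma1 f) = - 1 / sqrt 10)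
       \<and> (\<exists>f\<in>Sch. norm (Gamma2 f) - norm (Gamma1 f) = 1 / 4)"
proof (intro conjI ballI ex_min ex_max)
  fix f assume "f \<in> Sch"
  then obtain \<omega> where w: "\<omega> holomorphic_on ball 0 1" "\<omega> 0 = 0" "\<forall>z\<in>ball 0 1. norm (\<omega> z) < 1"
    "coef f 2 = coef \<omega> 1" "coef f 3 = 3/4 * coef \<omega> 1 ^ 2 + coef \<omega> 2 / 2"
    by (rule Sch_rel)
  note g = gamma_form[OF w(4,5)]
  note b = real_bounds[OF schur[OF w(1,2,3)]]
  show "- 1 / sqrt 10 \<le> norm (Gamma2 f) - norm (Gamma1 f)" using g b by simp
  show "norm (Gamma2 f) - norm (Gamma1 f) \<le> 1 / 4" using g b by simp
qed

end
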